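(* Let $G$ be a $(3,4)$-biregular $X,Y$-bigraph in which every vertex of $X$ has degree 3 and every vertex of $Y$ has degree 4. If $G$ has a subgraph that contains every vertex of $X$ and is a $(2,4)$-biregular bigraph, then $G$ has a $P_7$-factor (and hence an interval 6-coloring).
   Context: Graphs may have multiple edges. An $X,Y$-bigraph is a bipartite graph with partite sets $X$ and $Y$. An $(a,b)$-biregular bigraph is a bipartite graph in which every vertex of one part has degree $a$ and every vertex of the other part has degree $b$. A $P_7$-factor is a spanning subgraph each of whose components is a path on 7 vertices. An interval 6-coloring is a proper edge-coloring with colors from $\{1,\dots,6\}$ such that at every vertex the colors on its incident edges form a set of consecutive integers. *)

theory Defs
  imports Main
begin

text \<open>Multigraph bigraphs: a finite set E of edge identifiers, each edge e having
  endpoints ends e = (x, y) with x in X and y in Y. Parallel edges are allowed.\<close>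

definition incident :: "('e \<Rightarrow> 'v \<times> 'v) \<Rightarrow> 'e \<Rightarrow> 'v \<Rightarrow> bool" where
  "incident ends e v \<longleftrightarrow> fst (ends e) = v \<or> snd (ends e) = v"

definition joins :: "('e \<Rightarrow> 'v \<times> 'v) \<Rightarrow> 'e \<Rightarrow> 'v \<Rightarrow> 'v \<Rightarrow> bool" where
  "joins ends e u w \<longleftrightarrow> ends e = (u, w) \<or> ends e = (w, u)"

definition deg :: "'e set \<Rightarrow> ('e \<Rightarrow> 'v \<times> 'v) \<Rightarrow> 'v \<Rightarrow> nat" where
  "deg E ends v = card {e \<in> E. incident ends e v}"

definition bigraph :: "'v set \<Rightarrow> 'v set \<Rightarrow> 'e set \<Rightarrow> ('e \<Rightarrow> 'v \<times> 'v) \<Rightarrow> bool" where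
  "bigraph X Y E ends \<longleftrightarrow> finite X \<and> finite Y \<and> finite E \<and> X \<inter> Y = {} \<and>
     (\<forall>e\<in>E. fst (ends e) \<in> X \<and> snd (ends e) \<in> Y)"

definition biregular :: "'v set \<Rightarrow> 'v set \<Rightarrow> 'e set \<Rightarrow> ('e \<Rightarrow> 'v \<times> 'v) \<Rightarrow> nat \<Rightarrow> nat \<Rightarrow> bool" where
  "biregular X Y E ends a b \<longleftrightarrow> bigraph X Y E ends \<and>
     (\<forall>x\<in>X. deg E ends x = a) \<and> (\<forall>y\<in>Y. deg E ends y = b)"

definition P7_factor :: "'v set \<Rightarrow> 'e set \<Rightarrow> ('e \<Rightarrow> 'v \<times> 'v) \<Rightarrow> bool" where
  "P7_factor V E ends \<longleftrightarrow> (\<exists>F P. F \<subseteq> E \<and>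
     (\<forall>p\<in>P. distinct p \<and> length p = 7) \<and>
     (\<forall>p\<in>P. \<forall>q\<in>P. p \<noteq> q \<longrightarrow> set p \<inter> set q = {}) \<and>
     (\<Union>p\<in>P. set p) = V \<and>
     (\<forall>p\<in>P. \<forall>i<6. \<exists>!e. e \<in> F \<and> joins ends e (p ! i) (p ! Suc i)) \<and>
     (\<forall>e\<in>F. \<exists>p\<in>P. \<exists>i<6. joins ends e (p ! i) (p ! Suc i)))"

definition interval_coloring :: "nat \<Rightarrow> 'v set \<Rightarrow> 'e set \<Rightarrow> ('e \<Rightarrow> 'v \<times> 'v) \<Rightarrow> ('e \<Rightarrow> nat) \<Rightarrow> bool" where
  "interval_coloring k V E ends c \<longleftrightarrow>
     (\<forall>e\<in>E. c e \<in> {1..k}) \<and>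
     (\<forall>v\<in>V. \<forall>e\<in>E. \<forall>e'\<in>E. e \<noteq> e' \<and> incident ends e v \<and> incident ends e' v \<longrightarrow> c e \<noteq> c e') \<and>
     (\<forall>v\<in>V. \<exists>a b. c ` {e \<in> E. incident ends e v} = {a..b})"

end

theory Submission
  imports Defs
begin


definition dg2 :: "'e set \<Rightarrow> ('e \<Rightarrow> 'v \<times> 'v) \<Rightarrow> 'v \<Rightarrow> nat" where
  "dg2 E ends x = (\<Sum>e\<in>E. of_bool (fst (ends e) = x) + of_bool (snd (ends e) = x))"

definition tlo :: "('e \<Rightarrow> bool) \<Rightarrow> ('e \<Rightarrow> 'v \<times> 'v) \<Rightarrow> 'e \<Rightarrow> 'v" where
  "tlo ori ends e = (if ori e then fst (ends e) else snd (ends e))"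
definition hdo :: "('e \<Rightarrow> bool) \<Rightarrow> ('e \<Rightarrow> 'v \<times> 'v) \<Rightarrow> 'e \<Rightarrow> 'v" where
  "hdo ori ends e = (if ori e then snd (ends e) else fst (ends e))"

definition balanced :: "'e set \<Rightarrow> ('e \<Rightarrow> 'v \<times> 'v) \<Rightarrow> ('e \<Rightarrow> bool) \<Rightarrow> bool" where
  "balanced E ends ori \<longleftrightarrow> (\<forall>x. (\<Sum>e\<in>E. of_bool (tlo ori ends e = x)) = (\<Sum>e\<in>E. (of_bool (hdo ori ends e = x)::nat)))"

declare sum_of_bool_eq[simp del]

lemma euler_aux:
  fixes E :: "'e set" and ends :: "'e \<Rightarrow> 'v \<times> 'v"
  shows "finite E \<Longrightarrow> card E = n \<Longrightarrow> (\<forall>x. even (dg2 E ends x)) \<Longrightarrow> \<exists>ori. balanced E ends ori"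
proof (induction n arbitrary: E ends rule: less_induct)
  case (less n)
  show ?case
  proof (cases "E = {}")
    case True then show ?thesis by (simp add: balanced_def)
  next
    case False
    then obtain e1 where e1: "e1 \<in> E" by blast
    obtain u v where uv: "ends e1 = (u, v)" by fastforce
    show ?thesis
    proof (cases "u = v")
      case True
      let ?E = "E - {e1}"
      have c: "card ?E < n" using card_Diff1_less[OF less.prems(1) e1] less.prems(2) by simp
      have "even (dg2 ?E ends x)" for x
      proof -
        have "dg2 E ends x = (of_bool (fst (ends e1) = x) + of_bool (snd (ends e1) = x)) + dg2 ?E ends x"
          unfolding dg2_def using less.prems(1) e1 by (simp add: sum.remove)
        moreover have "even (dg2 E ends x)" using less.prems(3) by blast
        ultimately show ?thesis using uv True by (cases "v = x") simp_all
      qed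
      then obtain ori where ori: "balanced ?E ends ori" using less.IH[OF c _ refl] less.prems(1) by blast
      have "balanced E ends ori" unfolding balanced_def
      proof
        fix x
        have "(\<Sum>e\<in>E. of_bool (tlo ori ends e = x)) = of_bool (tlo ori ends e1 = x) + (\<Sum>e\<in>?E. (of_bool (tlo ori ends e = x)::nat))"
          using less.prems(1) e1 by (simp add: sum.remove)
        moreover have "(\<Sum>e\<in>E. of_bool (hdo ori ends e = x)) = of_bool (hdo ori ends e1 = x) + (\<Sum>e\<in>?E. (of_bool (hdo ori ends e = x)::nat))"
          using less.prems(1) e1 by (simp add: sum.remove)
        moreover have "tlo ori ends e1 = hdo ori ends e1" using uv True by (simp add: tlo_def hdo_def)
        ultimately show "(\<Sum>e\<in>E. of_bool (tlo ori ends e = x)) = (\<Sum>e\<in>E. (of_bool (hdo ori ends e = x)::nat))"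
          using ori unfolding balanced_def by simp
      qed
      then show ?thesis by blast
    next
      case False
      have d1: "dg2 E ends v = 1 + dg2 (E - {e1}) ends v"
        unfolding dg2_def using less.prems(1) e1 uv False by (simp add: sum.remove)
      have "even (dg2 E ends v)" using less.prems(3) by blast
      then have nz: "dg2 (E - {e1}) ends v \<noteq> 0" using d1 by (intro notI) simp
      have "\<exists>e\<in>E - {e1}. fst (ends e) = v \<or> snd (ends e) = v"
      proof (rule ccontr)
        assume "\<not> ?thesis"
        then have "dg2 (E - {e1}) ends v = 0" unfolding dg2_def by (intro sum.neutral) auto
        then show False using nz by simp
      qed
      then obtain e2 where e2: "e2 \<in> E - {e1}" "fst (ends e2) = v \<or> snd (ends e2) = v" by blast
      define w where "w = (if fst (ends e2) = v then snd (ends e2) else fst (ends e2))"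
      define ends' where "ends' = ends(e1 := (u, w))"
      let ?E = "E - {e2}"
      have fin: "finite ?E" using less.prems(1) by simp
      have c: "card ?E < n" using card_Diff1_less[OF less.prems(1), of e2] e2 less.prems(2) by simp
      have e1E: "e1 \<in> ?E" using e1 e2 by auto
      have split1: "(\<Sum>e\<in>E. g e) = g e1 + g e2 + (\<Sum>e\<in>E - {e1, e2}. g e)" for g :: "'e \<Rightarrow> nat"
      proof -
        have "(\<Sum>e\<in>E. g e) = g e2 + (\<Sum>e\<in>?E. g e)" using less.prems(1) e2 by (simp add: sum.remove)
        also have "(\<Sum>e\<in>?E. g e) = g e1 + (\<Sum>e\<in>?E - {e1}. g e)" using fin e1E by (simp add: sum.remove)
        finally show ?thesis by (simp add: Diff_insert2[symmetric] insert_commute)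
      qed
      have split2: "(\<Sum>e\<in>?E. g e) = g e1 + (\<Sum>e\<in>E - {e1, e2}. g e)" for g :: "'e \<Rightarrow> nat"
        using fin e1E by (simp add: sum.remove Diff_insert2[symmetric] insert_commute)
      have eq: "(\<Sum>e\<in>E - {e1, e2}. g (ends' e)) = (\<Sum>e\<in>E - {e1, e2}. g (ends e))" for g :: "'v \<times> 'v \<Rightarrow> nat"
        by (rule sum.cong) (auto simp: ends'_def)
      have e2w: "of_bool (fst (ends e2) = x) + of_bool (snd (ends e2) = x) = (of_bool (v = x) + of_bool (w = x) :: nat)" for x
        using e2(2) unfolding w_def by auto
      have "even (dg2 ?E ends' x)" for x
      proof -
        have A: "dg2 E ends x = of_bool (u = x) + of_bool (v = x) + (of_bool (v = x) + of_bool (w = x)) + (\<Sum>e\<in>E - {e1, e2}. of_bool (fst (ends e) = x) + of_bool (snd (ends e) = x))"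
          unfolding dg2_def by (subst split1) (simp add: uv e2w)
        have B: "dg2 ?E ends' x = of_bool (u = x) + of_bool (w = x) + (\<Sum>e\<in>E - {e1, e2}. of_bool (fst (ends e) = x) + of_bool (snd (ends e) = x))"
          unfolding dg2_def apply (subst split2)
          using eq[of "\<lambda>p. of_bool (fst p = x) + of_bool (snd p = x)"] by (simp add: ends'_def)
        have "even (dg2 E ends x)" using less.prems(3) by blast
        moreover have "dg2 E ends x = dg2 ?E ends' x + 2 * of_bool (v = x)" using A B by simp
        ultimately show ?thesis by simp
      qed
      then obtain or' where or': "balanced ?E ends' or'" using less.IH[OF c fin refl] by blast
      define ori where "ori = or'(e2 := (if or' e1 then fst (ends e2) = v else snd (ends e2) = v))"
      have "balanced E ends ori" unfolding balanced_def
      proof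
        fix x
        have eqo: "(\<Sum>e\<in>E - {e1, e2}. g (ori e) (ends e)) = (\<Sum>e\<in>E - {e1, e2}. g (or' e) (ends' e))" for g :: "bool \<Rightarrow> 'v \<times> 'v \<Rightarrow> nat"
          by (rule sum.cong) (auto simp: ends'_def ori_def)
        have T: "(\<Sum>e\<in>E. of_bool (tlo ori ends e = x)) = of_bool (tlo ori ends e1 = x) + of_bool (tlo ori ends e2 = x) + (\<Sum>e\<in>E - {e1, e2}. (of_bool (tlo or' ends' e = x)::nat))"
          apply (subst split1) using eqo[of "\<lambda>b p. of_bool ((if b then fst p else snd p) = x)"] by (simp add: tlo_def)
        have H: "(\<Sum>e\<in>E. of_bool (hdo ori ends e = x)) = of_bool (hdo ori ends e1 = x) + of_bool (hdo ori ends e2 = x) + (\<Sum>e\<in>E - {e1, e2}. (of_bool (hdo or' ends' e = x)::nat))"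
          apply (subst split1) using eqo[of "\<lambda>b p. of_bool ((if b then snd p else fst p) = x)"] by (simp add: hdo_def)
        have T': "(\<Sum>e\<in>?E. of_bool (tlo or' ends' e = x)) = of_bool (tlo or' ends' e1 = x) + (\<Sum>e\<in>E - {e1, e2}. (of_bool (tlo or' ends' e = x)::nat))"
          by (rule split2)
        have H': "(\<Sum>e\<in>?E. of_bool (hdo or' ends' e = x)) = of_bool (hdo or' ends' e1 = x) + (\<Sum>e\<in>E - {e1, e2}. (of_bool (hdo or' ends' e = x)::nat))"
          by (rule split2)
        have ne: "e1 \<noteq> e2" using e2 by auto
        have loc: "of_bool (tlo ori ends e1 = x) + of_bool (tlo ori ends e2 = x) + (of_bool (hdo or' ends' e1 = x)::nat)
             = of_bool (hdo ori ends e1 = x) + of_bool (hdo ori ends e2 = x) + of_bool (tlo or' ends' e1 = x)"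
          using e2(2) ne uv unfolding tlo_def hdo_def ori_def ends'_def w_def
          by (cases "or' e1"; cases "fst (ends e2) = v"; auto)
        show "(\<Sum>e\<in>E. of_bool (tlo ori ends e = x)) = (\<Sum>e\<in>E. (of_bool (hdo ori ends e = x)::nat))"
          using T H T' H' loc or' unfolding balanced_def by (simp add: balanced_def)
      qed
      then show ?thesis by blast
    qed
  qed
qed


definition good :: "'e set \<Rightarrow> ('e \<Rightarrow> 'v \<times> 'v) \<Rightarrow> ('e \<Rightarrow> bool) \<Rightarrow> bool" where
  "good E ends col \<longleftrightarrow> (\<forall>e\<in>E. \<forall>f\<in>E. e \<noteq> f \<and> (\<exists>v. incident ends e v \<and> incident ends f v) \<longrightarrow> col e \<noteq> col f)"

definition deg2b :: "'e set \<Rightarrow> ('e \<Rightarrow> 'v \<times> 'v) \<Rightarrow> bool" where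
  "deg2b E ends \<longleftrightarrow> (\<forall>v. \<forall>e1\<in>E. \<forall>e2\<in>E. \<forall>e3\<in>E. incident ends e1 v \<and> incident ends e2 v \<and> incident ends e3 v \<longrightarrow> e1 = e2 \<or> e1 = e3 \<or> e2 = e3)"

lemma good_iff:
  assumes "X \<inter> Y = {}" "\<forall>e\<in>E. fst (ends e) \<in> X \<and> snd (ends e) \<in> Y"
  shows "good E ends col \<longleftrightarrow> (\<forall>e\<in>E. \<forall>f\<in>E. e \<noteq> f \<and> (fst (ends e) = fst (ends f) \<or> snd (ends e) = snd (ends f)) \<longrightarrow> col e \<noteq> col f)"
proof -
  have *: "(\<exists>v. incident ends e v \<and> incident ends f v) \<longleftrightarrow> (fst (ends e) = fst (ends f) \<or> snd (ends e) = snd (ends f))"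
    if "e \<in> E" "f \<in> E" for e f
  proof -
    have "fst (ends e) \<in> X" "snd (ends e) \<in> Y" "fst (ends f) \<in> X" "snd (ends f) \<in> Y" using assms(2) that by auto
    then have "fst (ends e) \<noteq> snd (ends f)" "snd (ends e) \<noteq> fst (ends f)" using assms(1) by auto
    then show ?thesis unfolding incident_def by auto
  qed
  show ?thesis unfolding good_def by (simp add: *)
qed

lemma deg2b_mono: fixes ends :: "'e \<Rightarrow> 'v \<times> 'v" assumes "deg2b E ends" "E' \<subseteq> E" shows "deg2b E' ends"
  using assms unfolding deg2b_def by (meson subsetD)

lemma twocol_aux:
  fixes E :: "'e set" and ends :: "'e \<Rightarrow> 'v \<times> 'v"
  shows "finite E \<Longrightarrow> card E = n \<Longrightarrow> X \<inter> Y = {} \<Longrightarrow> (\<forall>e\<in>E. fst (ends e) \<in> X \<and> snd (ends e) \<in> Y)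
    \<Longrightarrow> deg2b E ends \<Longrightarrow> \<exists>col. good E ends col"
proof (induction n arbitrary: E ends rule: less_induct)
  case (less n)
  note D = less.prems(5)[unfolded deg2b_def incident_def]
  show ?case
  proof (cases "E = {}")
    case True then show ?thesis by (simp add: good_def)
  next
    case False
    then obtain e1 where e1: "e1 \<in> E" by blast
    obtain x y where xy: "ends e1 = (x, y)" by fastforce
    have xX: "x \<in> X" and yY: "y \<in> Y" using less.prems(4) e1 xy by force+
    show ?thesis
    proof (cases "\<exists>e2\<in>E. e2 \<noteq> e1 \<and> snd (ends e2) = y")
      case True
      then obtain e2 where e2: "e2 \<in> E" "e2 \<noteq> e1" "snd (ends e2) = y" by blast
      obtain x' where x': "fst (ends e2) = x'" by blast
      show ?thesis
      proof (cases "\<exists>e3\<in>E. e3 \<noteq> e1 \<and> e3 \<noteq> e2 \<and> fst (ends e3) = x'")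
        case True
        then obtain e3 where e3: "e3 \<in> E" "e3 \<noteq> e1" "e3 \<noteq> e2" "fst (ends e3) = x'" by blast
        obtain y' where y': "snd (ends e3) = y'" by blast
        define ends' where "ends' = ends(e1 := (x, y'))"
        let ?E = "E - {e2, e3}"
        have fin: "finite ?E" using less.prems(1) by simp
        have "card (E - {e2} - {e3}) < card E" using card_Diff2_less[OF less.prems(1) e2(1) e3(1)] by simp
        moreover have "E - {e2} - {e3} = ?E" by auto
        ultimately have c: "card ?E < n" using less.prems(2) by simp
        have bip: "\<forall>e\<in>?E. fst (ends' e) \<in> X \<and> snd (ends' e) \<in> Y"
          using less.prems(4) xX e3 y' by (auto simp: ends'_def)
        have d2: "deg2b ?E ends'" unfolding deg2b_def incident_def
        proof (intro allI ballI impI)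
          fix v f1 f2 f3 assume f: "f1 \<in> ?E" "f2 \<in> ?E" "f3 \<in> ?E"
            and inc: "(fst (ends' f1) = v \<or> snd (ends' f1) = v) \<and> (fst (ends' f2) = v \<or> snd (ends' f2) = v) \<and> (fst (ends' f3) = v \<or> snd (ends' f3) = v)"
          show "f1 = f2 \<or> f1 = f3 \<or> f2 = f3"
          proof (rule ccontr)
            assume nd: "\<not> (f1 = f2 \<or> f1 = f3 \<or> f2 = f3)"
            have h: "(fst (ends f) = v \<or> snd (ends f) = v) \<or> (f = e1 \<and> v = y')"
              if "fst (ends' f) = v \<or> snd (ends' f) = v" for f
              using that xy by (auto simp: ends'_def split: if_splits)
            have h1: "(fst (ends f1) = v \<or> snd (ends f1) = v) \<or> (f1 = e1 \<and> v = y')" using h inc by blast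
            have h2: "(fst (ends f2) = v \<or> snd (ends f2) = v) \<or> (f2 = e1 \<and> v = y')" using h inc by blast
            have h3: "(fst (ends f3) = v \<or> snd (ends f3) = v) \<or> (f3 = e1 \<and> v = y')" using h inc by blast
            have i3: "fst (ends e3) = y' \<or> snd (ends e3) = y'" using y' by simp
            have fE: "f1 \<in> E" "f2 \<in> E" "f3 \<in> E" "f1 \<noteq> e3" "f2 \<noteq> e3" "f3 \<noteq> e3" using f by auto
            show False
            proof (cases "f1 = e1 \<and> v = y' \<and> \<not> (fst (ends f1) = v \<or> snd (ends f1) = v)")
              case True
              then show False using D[rule_format, OF fE(2) fE(3) e3(1), of y'] h2 h3 nd i3 fE by blast
            next
              case F1: False
              show False
              proof (cases "f2 = e1 \<and> v = y' \<and> \<not> (fst (ends f2) = v \<or> snd (ends f2) = v)")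
                case True
                then show False using D[rule_format, OF fE(1) fE(3) e3(1), of y'] h1 h3 nd i3 fE by blast
              next
                case F2: False
                show False
                proof (cases "f3 = e1 \<and> v = y' \<and> \<not> (fst (ends f3) = v \<or> snd (ends f3) = v)")
                  case True
                  then show False using D[rule_format, OF fE(1) fE(2) e3(1), of y'] h1 h2 nd i3 fE by blast
                next
                  case F3: False
                  then show False using D[rule_format, OF fE(1) fE(2) fE(3), of v] h1 h2 h3 F1 F2 nd by blast
                qed
              qed
            qed
          qed
        qed
        obtain col' where col': "good ?E ends' col'" using less.IH[OF c fin refl less.prems(3) bip d2] by (elim exE)
        define col where "col = col'(e2 := \<not> col' e1, e3 := col' e1)"
        have G': "\<forall>e\<in>?E. \<forall>f\<in>?E. e \<noteq> f \<and> (fst (ends' e) = fst (ends' f) \<or> snd (ends' e) = snd (ends' f)) \<longrightarrow> col' e \<noteq> col' f"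
          by (rule good_iff[OF less.prems(3) bip, THEN iffD1, OF col'])
        have e1E: "e1 \<in> ?E" using e1 e2 e3 by auto
        have K2: "col e2 \<noteq> col f" if f: "f \<in> E" "f \<noteq> e2" "fst (ends e2) = fst (ends f) \<or> snd (ends e2) = snd (ends f)" for f
        proof (cases "f = e1 \<or> f = e3")
          case True then show ?thesis unfolding col_def using e2 e3 by auto
        next
          case False
          show ?thesis
          proof (cases "snd (ends e2) = snd (ends f)")
            case True then show ?thesis using D[rule_format, of e1 e2 f y] f e1 e2 xy False by auto
          next
            case F2: False then show ?thesis using D[rule_format, of e3 e2 f x'] f e3 e2 x' False by auto
          qed
        qed
        have K3: "col e3 \<noteq> col f" if f: "f \<in> E" "f \<noteq> e3" "fst (ends e3) = fst (ends f) \<or> snd (ends e3) = snd (ends f)" for f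
        proof (cases "f = e2")
          case True then show ?thesis unfolding col_def using e2 e3 by auto
        next
          case nf2: False
          show ?thesis
          proof (cases "f = e1")
            case True
            show ?thesis
            proof (cases "fst (ends e3) = fst (ends f)")
              case True then show ?thesis using D[rule_format, of e1 e2 e3 x] e1 e2 e3 xy x' \<open>f = e1\<close> by auto
            next
              case False then show ?thesis using D[rule_format, of e1 e2 e3 y] e1 e2 e3 xy \<open>f = e1\<close> f by auto
            qed
          next
            case nf1: False
            show ?thesis
            proof (cases "fst (ends e3) = fst (ends f)")
              case True then show ?thesis using D[rule_format, of e3 e2 f x'] f e3 e2 x' nf2 by auto
            next
              case False
              then have "snd (ends f) = y'" using f y' by auto
              then have "col' e1 \<noteq> col' f" using G'[rule_format, of e1 f] e1E f nf1 nf2 by (auto simp: ends'_def)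
              then show ?thesis unfolding col_def using nf1 nf2 e3 f(2) by auto
            qed
          qed
        qed
        have "\<forall>e\<in>E. \<forall>f\<in>E. e \<noteq> f \<and> (fst (ends e) = fst (ends f) \<or> snd (ends e) = snd (ends f)) \<longrightarrow> col e \<noteq> col f"
        proof (intro ballI impI)
          fix e f assume ef: "e \<in> E" "f \<in> E" "e \<noteq> f \<and> (fst (ends e) = fst (ends f) \<or> snd (ends e) = snd (ends f))"
          show "col e \<noteq> col f"
          proof (cases "e = e2 \<or> f = e2")
            case True then show ?thesis using K2 ef by (metis)
          next
            case n2: False
            show ?thesis
            proof (cases "e = e3 \<or> f = e3")
              case True then show ?thesis using K3 ef by (metis)
            next
              case n3: False
              have eE: "e \<in> ?E" "f \<in> ?E" using ef n2 n3 by auto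
              show ?thesis
              proof (cases "e = e1 \<or> f = e1")
                case False then show ?thesis using G'[rule_format, of e f] eE ef n2 n3 unfolding col_def by (auto simp: ends'_def)
              next
                case True
                then have "fst (ends e) = fst (ends f)"
                  using D[rule_format, of e1 e2 f y] D[rule_format, of e1 e2 e y] ef e1 e2 xy n2 by auto
                then show ?thesis using G'[rule_format, of e f] eE ef n2 n3 True xy unfolding col_def by (auto simp: ends'_def)
              qed
            qed
          qed
        qed
        then have "good E ends col" by (rule good_iff[OF less.prems(3,4), THEN iffD2])
        then show ?thesis by blast
      next
        case False
        let ?E = "E - {e2}"
        have fin: "finite ?E" using less.prems(1) by simp
        have c: "card ?E < n" using card_Diff1_less[OF less.prems(1), of e2] e2 less.prems(2) by simp
        have bip: "\<forall>e\<in>?E. fst (ends e) \<in> X \<and> snd (ends e) \<in> Y" using less.prems(4) by auto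
        have d2: "deg2b ?E ends" using deg2b_mono[OF less.prems(5)] by blast
        obtain col' where col': "good ?E ends col'" using less.IH[OF c fin refl less.prems(3) bip d2] by (elim exE)
        define col where "col = col'(e2 := \<not> col' e1)"
        have G': "\<forall>e\<in>?E. \<forall>f\<in>?E. e \<noteq> f \<and> (fst (ends e) = fst (ends f) \<or> snd (ends e) = snd (ends f)) \<longrightarrow> col' e \<noteq> col' f"
          by (rule good_iff[OF less.prems(3) bip, THEN iffD1, OF col'])
        have K: "col e2 \<noteq> col f" if f: "f \<in> E" "f \<noteq> e2" "fst (ends e2) = fst (ends f) \<or> snd (ends e2) = snd (ends f)" for f
        proof -
          have "f = e1"
          proof (cases "snd (ends e2) = snd (ends f)")
            case True then show ?thesis using D[rule_format, of e1 e2 f y] f e1 e2 xy by auto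
          next
            case False then show ?thesis using \<open>\<not> (\<exists>e3\<in>E. e3 \<noteq> e1 \<and> e3 \<noteq> e2 \<and> fst (ends e3) = x')\<close> f x' by auto
          qed
          then show ?thesis unfolding col_def using e2 by auto
        qed
        have "\<forall>e\<in>E. \<forall>f\<in>E. e \<noteq> f \<and> (fst (ends e) = fst (ends f) \<or> snd (ends e) = snd (ends f)) \<longrightarrow> col e \<noteq> col f"
        proof (intro ballI impI)
          fix e f assume ef: "e \<in> E" "f \<in> E" "e \<noteq> f \<and> (fst (ends e) = fst (ends f) \<or> snd (ends e) = snd (ends f))"
          show "col e \<noteq> col f"
          proof (cases "e = e2 \<or> f = e2")
            case True then show ?thesis using K ef by (metis)
          next
            case False then show ?thesis using G' ef unfolding col_def by auto
          qed
        qed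
        then have "good E ends col" by (rule good_iff[OF less.prems(3,4), THEN iffD2])
        then show ?thesis by blast
      qed
    next
      case False
      let ?E = "E - {e1}"
      have fin: "finite ?E" using less.prems(1) by simp
      have c: "card ?E < n" using card_Diff1_less[OF less.prems(1) e1] less.prems(2) by simp
      have bip: "\<forall>e\<in>?E. fst (ends e) \<in> X \<and> snd (ends e) \<in> Y" using less.prems(4) by auto
      have d2: "deg2b ?E ends" using deg2b_mono[OF less.prems(5)] by blast
      obtain col' where col': "good ?E ends col'" using less.IH[OF c fin refl less.prems(3) bip d2] by (elim exE)
      define col where "col = col'(e1 := (if \<exists>f\<in>?E. fst (ends f) = x then \<not> col' (SOME f. f \<in> ?E \<and> fst (ends f) = x) else True))"
      have G': "\<forall>e\<in>?E. \<forall>f\<in>?E. e \<noteq> f \<and> (fst (ends e) = fst (ends f) \<or> snd (ends e) = snd (ends f)) \<longrightarrow> col' e \<noteq> col' f"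
        by (rule good_iff[OF less.prems(3) bip, THEN iffD1, OF col'])
      have K: "col e1 \<noteq> col f" if f: "f \<in> E" "f \<noteq> e1" "fst (ends e1) = fst (ends f) \<or> snd (ends e1) = snd (ends f)" for f
      proof -
        have fx: "fst (ends f) = x" using f False xy by auto
        then have ex: "\<exists>f\<in>?E. fst (ends f) = x" using f by blast
        define g where "g = (SOME f. f \<in> ?E \<and> fst (ends f) = x)"
        have g: "g \<in> ?E" "fst (ends g) = x" using someI_ex[OF ex[unfolded Bex_def]] unfolding g_def by blast+
        have "g = f" using D[rule_format, of e1 f g x] f g e1 fx xy by auto
        then show ?thesis unfolding col_def using ex g_def f by auto
      qed
      have "\<forall>e\<in>E. \<forall>f\<in>E. e \<noteq> f \<and> (fst (ends e) = fst (ends f) \<or> snd (ends e) = snd (ends f)) \<longrightarrow> col e \<noteq> col f"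
      proof (intro ballI impI)
        fix e f assume ef: "e \<in> E" "f \<in> E" "e \<noteq> f \<and> (fst (ends e) = fst (ends f) \<or> snd (ends e) = snd (ends f))"
        show "col e \<noteq> col f"
        proof (cases "e = e1 \<or> f = e1")
          case True then show ?thesis using K ef by (metis)
        next
          case False then show ?thesis using G' ef unfolding col_def by auto
        qed
      qed
      then have "good E ends col" by (rule good_iff[OF less.prems(3,4), THEN iffD2])
      then show ?thesis by blast
    qed
  qed
qed


lemma pair_orient:
  fixes S :: "'s set" and T :: "'t set" and g :: "'s \<Rightarrow> 't" and h :: "'s \<Rightarrow> 'v"
  assumes finS: "finite S" and finT: "finite T" and gS: "\<forall>s\<in>S. g s \<in> T"
    and fib: "\<forall>t\<in>T. card {s\<in>S. g s = t} = 2"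
    and ev: "\<forall>v. even (card {s\<in>S. h s = v})"
  shows "\<exists>c d. (\<forall>t\<in>T. c t \<in> S \<and> d t \<in> S \<and> g (c t) = t \<and> g (d t) = t \<and> c t \<noteq> d t \<and> {s\<in>S. g s = t} = {c t, d t})
     \<and> (\<forall>v. 2 * card {t\<in>T. h (c t) = v} = card {s\<in>S. h s = v})"
proof -
  have "\<forall>t\<in>T. \<exists>p. fst p \<noteq> snd p \<and> {s\<in>S. g s = t} = {fst p, snd p}"
  proof
    fix t assume "t \<in> T"
    obtain x y where "{s\<in>S. g s = t} = {x, y}" "x \<noteq> y" using fib[rule_format, OF \<open>t \<in> T\<close>, unfolded card_2_iff] by blast
    then show "\<exists>p. fst p \<noteq> snd p \<and> {s\<in>S. g s = t} = {fst p, snd p}" by (intro exI[of _ "(x, y)"]) simp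
  qed
  from bchoice[OF this] obtain U where U: "\<forall>t\<in>T. fst (U t) \<noteq> snd (U t) \<and> {s\<in>S. g s = t} = {fst (U t), snd (U t)}"
    by blast
  define u1 where "u1 t = fst (U t)" for t
  define u2 where "u2 t = snd (U t)" for t
  have U': "\<And>t. t \<in> T \<Longrightarrow> u1 t \<noteq> u2 t \<and> {s\<in>S. g s = t} = {u1 t, u2 t}" using U by (simp add: u1_def u2_def)
  define ends1 where "ends1 t = (h (u1 t), h (u2 t))" for t
  have dg: "dg2 T ends1 v = card {s\<in>S. h s = v}" for v
  proof -
    have "card {s\<in>S. h s = v} = (\<Sum>s\<in>S. (of_bool (h s = v) :: nat))"
      using finS by (simp add: sum_of_bool_eq Int_def conj_commute)
    also have "\<dots> = (\<Sum>t\<in>T. \<Sum>s\<in>{s\<in>S. g s = t}. (of_bool (h s = v) :: nat))"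
      using gS by (intro sum.group[OF finS finT, symmetric]) auto
    also have "\<dots> = (\<Sum>t\<in>T. of_bool (h (u1 t) = v) + of_bool (h (u2 t) = v))"
      by (rule sum.cong[OF refl]) (simp add: U')
    finally show ?thesis unfolding dg2_def ends1_def by simp
  qed
  have "\<exists>ori. balanced T ends1 ori"
    by (rule euler_aux[OF finT refl]) (simp add: dg ev)
  then obtain ori where ori: "balanced T ends1 ori" by blast
  define c where "c t = (if ori t then u1 t else u2 t)" for t
  define d where "d t = (if ori t then u2 t else u1 t)" for t
  have P1: "\<forall>t\<in>T. c t \<in> S \<and> d t \<in> S \<and> g (c t) = t \<and> g (d t) = t \<and> c t \<noteq> d t \<and> {s\<in>S. g s = t} = {c t, d t}"
  proof
    fix t assume t: "t \<in> T"
    have "u1 t \<in> {s\<in>S. g s = t}" "u2 t \<in> {s\<in>S. g s = t}" using U'[OF t] by auto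
    then show "c t \<in> S \<and> d t \<in> S \<and> g (c t) = t \<and> g (d t) = t \<and> c t \<noteq> d t \<and> {s\<in>S. g s = t} = {c t, d t}"
      using U'[OF t] unfolding c_def d_def by auto
  qed
  have P2: "2 * card {t\<in>T. h (c t) = v} = card {s\<in>S. h s = v}" for v
  proof -
    have b: "(\<Sum>t\<in>T. (of_bool (h (c t) = v) :: nat)) = (\<Sum>t\<in>T. of_bool (h (d t) = v))"
    proof -
      have tl: "tlo ori ends1 t = h (c t)" for t by (simp add: tlo_def c_def ends1_def)
      have hd: "hdo ori ends1 t = h (d t)" for t by (simp add: hdo_def d_def ends1_def)
      show ?thesis using ori[unfolded balanced_def, rule_format, of v] unfolding tl hd .
    qed
    have "(\<Sum>t\<in>T. (of_bool (h (c t) = v) :: nat)) + (\<Sum>t\<in>T. of_bool (h (d t) = v)) = dg2 T ends1 v"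
      unfolding dg2_def ends1_def c_def d_def sum.distrib[symmetric] by (rule sum.cong) auto
    moreover have "(\<Sum>t\<in>T. (of_bool (h (c t) = v) :: nat)) = card {t\<in>T. h (c t) = v}"
      using finT by (simp add: sum_of_bool_eq Int_def conj_commute)
    ultimately show ?thesis using b dg by simp
  qed
  show ?thesis using P1 P2 by blast
qed




locale L2 =
  fixes X Y :: "'v set" and E :: "'e set" and ends :: "'e \<Rightarrow> 'v \<times> 'v" and Y' :: "'v set" and F :: "'e set"
    and a b r :: "'v \<Rightarrow> 'e" and c n q1 q2 :: "'v \<Rightarrow> 'v"
  assumes finX: "finite X" and finY: "finite Y" and finE: "finite E" and disj: "X \<inter> Y = {}"
    and endsE: "\<forall>e\<in>E. fst (ends e) \<in> X \<and> snd (ends e) \<in> Y"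
    and Y'Y: "Y' \<subseteq> Y" and FE: "F \<subseteq> E" and endsF: "\<forall>e\<in>F. snd (ends e) \<in> Y'"
    and degY: "\<forall>y\<in>Y. card {e\<in>E. snd (ends e) = y} = 4"
    and A1: "\<forall>x\<in>X. a x \<in> F \<and> b x \<in> F \<and> r x \<in> E - F \<and> a x \<noteq> b x \<and> fst (ends (a x)) = x \<and> fst (ends (b x)) = x \<and> fst (ends (r x)) = x"
    and A2: "\<forall>x\<in>X. {e\<in>E. fst (ends e) = x} = {a x, b x, r x}"
    and A3: "\<forall>x\<in>X. snd (ends (r x)) \<in> Y - Y'"
    and A4: "\<forall>y\<in>Y'. c y \<in> X \<and> n y \<in> X \<and> snd (ends (a (c y))) = y \<and> snd (ends (a (n y))) = y \<and> c y \<noteq> n y \<and> {x\<in>X. snd (ends (a x)) = y} = {c y, n y}"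
    and A5: "\<forall>z\<in>Y - Y'. q1 z \<in> Y' \<and> q2 z \<in> Y' \<and> q1 z \<noteq> q2 z \<and> {y\<in>Y'. snd (ends (r (c y))) = z} = {q1 z, q2 z}"
begin

definition "Path z = [n (q1 z), q1 z, c (q1 z), z, c (q2 z), q2 z, n (q2 z)]"
definition "Fac = a ` X \<union> r ` (c ` Y')"

lemma aE: "x \<in> X \<Longrightarrow> a x \<in> E \<and> b x \<in> E \<and> r x \<in> E \<and> a x \<in> F \<and> b x \<in> F \<and> r x \<notin> F"
  using A1 FE by blast

lemma ends_a: "x \<in> X \<Longrightarrow> ends (a x) = (x, snd (ends (a x)))"
  using A1 by (metis prod.collapse)
lemma ends_r: "x \<in> X \<Longrightarrow> ends (r x) = (x, snd (ends (r x)))"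
  using A1 by (metis prod.collapse)

lemma ya_Y': "x \<in> X \<Longrightarrow> snd (ends (a x)) \<in> Y'"
  using A1 endsF by blast

lemma zr_Z: "x \<in> X \<Longrightarrow> snd (ends (r x)) \<in> Y - Y'"
  using A3 by blast

lemma cn: "y \<in> Y' \<Longrightarrow> c y \<in> X \<and> n y \<in> X \<and> snd (ends (a (c y))) = y \<and> snd (ends (a (n y))) = y \<and> c y \<noteq> n y"
  using A4 by blast

lemma qq: "z \<in> Y - Y' \<Longrightarrow> q1 z \<in> Y' \<and> q2 z \<in> Y' \<and> q1 z \<noteq> q2 z \<and> snd (ends (r (c (q1 z)))) = z \<and> snd (ends (r (c (q2 z)))) = z"
proof -
  assume z: "z \<in> Y - Y'"
  have h: "{y\<in>Y'. snd (ends (r (c y))) = z} = {q1 z, q2 z}" and "q1 z \<noteq> q2 z" using A5 z by auto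
  have "q1 z \<in> {y\<in>Y'. snd (ends (r (c y))) = z}" "q2 z \<in> {y\<in>Y'. snd (ends (r (c y))) = z}" unfolding h by auto
  then show ?thesis using \<open>q1 z \<noteq> q2 z\<close> by auto
qed

lemma yq: "y \<in> Y' \<Longrightarrow> snd (ends (r (c y))) \<in> Y - Y' \<and> (y = q1 (snd (ends (r (c y)))) \<or> y = q2 (snd (ends (r (c y)))))"
proof -
  assume y: "y \<in> Y'"
  define z where "z = snd (ends (r (c y)))"
  have z: "z \<in> Y - Y'" using zr_Z cn y unfolding z_def by blast
  have "y \<in> {y\<in>Y'. snd (ends (r (c y))) = z}" using y z_def by simp
  then have "y \<in> {q1 z, q2 z}" using A5 z by auto
  then show ?thesis using z unfolding z_def by auto
qed

lemma xcn: "x \<in> X \<Longrightarrow> x = c (snd (ends (a x))) \<or> x = n (snd (ends (a x)))"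
proof -
  assume x: "x \<in> X"
  define y where "y = snd (ends (a x))"
  have y: "y \<in> Y'" using ya_Y' x y_def by simp
  have "x \<in> {x'\<in>X. snd (ends (a x')) = y}" using x y_def by simp
  then have "x \<in> {c y, n y}" using A4 y by auto
  then show ?thesis unfolding y_def by auto
qed

lemma Fac_E: "Fac \<subseteq> E"
  unfolding Fac_def using aE cn by auto

lemma J1: assumes "x \<in> X" "y \<in> Y'" "e \<in> Fac" "joins ends e x y \<or> joins ends e y x" shows "e = a x"
proof -
  have eE: "e \<in> E" using assms(3) Fac_E by auto
  have yY: "y \<in> Y" using assms(2) Y'Y by auto
  have "y \<notin> X" using yY disj by auto
  then have en: "ends e = (x, y)" using assms(4) endsE eE unfolding joins_def by auto
  show ?thesis
  proof (cases "e \<in> a ` X")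
    case True
    then obtain x' where x': "x' \<in> X" "e = a x'" by auto
    then show ?thesis using A1 en by auto
  next
    case False
    then obtain y' where y': "y' \<in> Y'" "e = r (c y')" using assms(3) unfolding Fac_def by auto
    then have "snd (ends e) \<in> Y - Y'" using zr_Z cn by blast
    then show ?thesis using en assms(2) by auto
  qed
qed

lemma J2: assumes "x \<in> X" "z \<in> Y - Y'" "e \<in> Fac" "joins ends e x z \<or> joins ends e z x" shows "e = r x"
proof -
  have eE: "e \<in> E" using assms(3) Fac_E by auto
  have "z \<notin> X" using assms(2) disj by auto
  then have en: "ends e = (x, z)" using assms(4) endsE eE unfolding joins_def by auto
  show ?thesis
  proof (cases "e \<in> a ` X")
    case True
    then obtain x' where x': "x' \<in> X" "e = a x'" by auto
    then have "snd (ends e) \<in> Y'" using ya_Y' by blast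
    then show ?thesis using en assms(2) by auto
  next
    case False
    then obtain y' where y': "y' \<in> Y'" "e = r (c y')" using assms(3) unfolding Fac_def by auto
    then show ?thesis using en A1 cn by (metis fst_conv)
  qed
qed

lemma path_facts:
  assumes z: "z \<in> Y - Y'"
  shows "distinct (Path z)" "length (Path z) = 7" "set (Path z) \<subseteq> X \<union> Y"
proof -
  have q: "q1 z \<in> Y'" "q2 z \<in> Y'" "q1 z \<noteq> q2 z" using qq z by auto
  have c1: "c (q1 z) \<in> X" "n (q1 z) \<in> X" "snd (ends (a (c (q1 z)))) = q1 z" "snd (ends (a (n (q1 z)))) = q1 z" "c (q1 z) \<noteq> n (q1 z)"
    using cn q by auto
  have c2: "c (q2 z) \<in> X" "n (q2 z) \<in> X" "snd (ends (a (c (q2 z)))) = q2 z" "snd (ends (a (n (q2 z)))) = q2 z" "c (q2 z) \<noteq> n (q2 z)"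
    using cn q by auto
  have XY: "\<And>u v. u \<in> X \<Longrightarrow> v \<in> Y \<Longrightarrow> u \<noteq> v" using disj by auto
  have "q1 z \<in> Y" "q2 z \<in> Y" "z \<in> Y" using q Y'Y z by auto
  moreover have "z \<noteq> q1 z" "z \<noteq> q2 z" using q z by auto
  moreover have "c (q1 z) \<noteq> c (q2 z)" "c (q1 z) \<noteq> n (q2 z)" "n (q1 z) \<noteq> c (q2 z)" "n (q1 z) \<noteq> n (q2 z)"
    using c1(3,4) c2(3,4) q(3) by metis+
  moreover have "q1 z \<notin> X" "q2 z \<notin> X" "z \<notin> X" using q Y'Y z disj by auto
  ultimately have ne: "n (q1 z) \<noteq> q1 z" "n (q1 z) \<noteq> c (q1 z)" "n (q1 z) \<noteq> z" "n (q1 z) \<noteq> c (q2 z)"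
    "n (q1 z) \<noteq> q2 z" "n (q1 z) \<noteq> n (q2 z)" "q1 z \<noteq> c (q1 z)" "q1 z \<noteq> z" "q1 z \<noteq> c (q2 z)"
    "q1 z \<noteq> q2 z" "q1 z \<noteq> n (q2 z)" "c (q1 z) \<noteq> z" "c (q1 z) \<noteq> c (q2 z)" "c (q1 z) \<noteq> q2 z"
    "c (q1 z) \<noteq> n (q2 z)" "z \<noteq> c (q2 z)" "z \<noteq> q2 z" "z \<noteq> n (q2 z)" "c (q2 z) \<noteq> q2 z"
    "c (q2 z) \<noteq> n (q2 z)" "q2 z \<noteq> n (q2 z)"
    using c1 c2 q(3) by (metis)+
  then show "distinct (Path z)" unfolding Path_def by simp
  show "length (Path z) = 7" unfolding Path_def by simp
  show "set (Path z) \<subseteq> X \<union> Y" unfolding Path_def using c1 c2 q Y'Y z by auto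
qed

definition own where "own v = (if v \<in> X then snd (ends (r (c (snd (ends (a v)))))) else if v \<in> Y' then snd (ends (r (c v))) else v)"

lemma own_path: assumes z: "z \<in> Y - Y'" and v: "v \<in> set (Path z)" shows "own v = z"
proof -
  have q: "q1 z \<in> Y'" "q2 z \<in> Y'" "snd (ends (r (c (q1 z)))) = z" "snd (ends (r (c (q2 z)))) = z" using qq z by auto
  have c1: "c (q1 z) \<in> X" "n (q1 z) \<in> X" "snd (ends (a (c (q1 z)))) = q1 z" "snd (ends (a (n (q1 z)))) = q1 z"
    using cn q by auto
  have c2: "c (q2 z) \<in> X" "n (q2 z) \<in> X" "snd (ends (a (c (q2 z)))) = q2 z" "snd (ends (a (n (q2 z)))) = q2 z"
    using cn q by auto
  have nX: "q1 z \<notin> X" "q2 z \<notin> X" "z \<notin> X" using q Y'Y z disj by auto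
  show ?thesis using v c1 c2 q nX z unfolding Path_def own_def by auto
qed

lemma cover: assumes v: "v \<in> X \<union> Y" shows "\<exists>z\<in>Y - Y'. v \<in> set (Path z)"
proof -
  have Yc: "y \<in> set (Path (snd (ends (r (c y))))) \<and> c y \<in> set (Path (snd (ends (r (c y))))) \<and> n y \<in> set (Path (snd (ends (r (c y)))))"
    if y: "y \<in> Y'" for y
    using yq[OF y] unfolding Path_def by auto
  show ?thesis
  proof (cases "v \<in> X")
    case True
    define y where "y = snd (ends (a v))"
    have y: "y \<in> Y'" using ya_Y' True y_def by simp
    have "v = c y \<or> v = n y" using xcn True y_def by simp
    then show ?thesis using Yc[OF y] yq[OF y] by blast
  next
    case False
    then have "v \<in> Y" using v by auto
    show ?thesis
    proof (cases "v \<in> Y'")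
      case True
      then show ?thesis using Yc yq by blast
    next
      case False
      then have "v \<in> Y - Y'" using \<open>v \<in> Y\<close> by auto
      then show ?thesis unfolding Path_def by auto
    qed
  qed
qed

lemma P7: "P7_factor (X \<union> Y) E ends"
  unfolding P7_factor_def
proof (intro exI[of _ Fac] exI[of _ "Path ` (Y - Y')"] conjI)
  show "Fac \<subseteq> E" by (rule Fac_E)
  show "\<forall>p\<in>Path ` (Y - Y'). distinct p \<and> length p = 7" using path_facts by auto
  show "\<forall>p\<in>Path ` (Y - Y'). \<forall>q\<in>Path ` (Y - Y'). p \<noteq> q \<longrightarrow> set p \<inter> set q = {}"
  proof (intro ballI impI)
    fix p q assume p: "p \<in> Path ` (Y - Y')" and q: "q \<in> Path ` (Y - Y')" and pq: "p \<noteq> q"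
    then obtain z z' where z: "z \<in> Y - Y'" "p = Path z" and z': "z' \<in> Y - Y'" "q = Path z'" by auto
    then have "z \<noteq> z'" using pq by auto
    then show "set p \<inter> set q = {}" using own_path[OF z(1)] own_path[OF z'(1)] unfolding z(2) z'(2) by blast
  qed
  show "(\<Union>p\<in>Path ` (Y - Y'). set p) = X \<union> Y"
    using path_facts(3) cover by fastforce
  show "\<forall>p\<in>Path ` (Y - Y'). \<forall>i<6. \<exists>!e. e \<in> Fac \<and> joins ends e (p ! i) (p ! Suc i)"
  proof (intro ballI allI impI)
    fix p i assume p: "p \<in> Path ` (Y - Y')" and i: "i < (6::nat)"
    then obtain z where z: "z \<in> Y - Y'" "p = Path z" by auto
    have q: "q1 z \<in> Y'" "q2 z \<in> Y'" "snd (ends (r (c (q1 z)))) = z" "snd (ends (r (c (q2 z)))) = z" using qq z by auto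
    have c1: "c (q1 z) \<in> X" "n (q1 z) \<in> X" "snd (ends (a (c (q1 z)))) = q1 z" "snd (ends (a (n (q1 z)))) = q1 z"
      using cn q by auto
    have c2: "c (q2 z) \<in> X" "n (q2 z) \<in> X" "snd (ends (a (c (q2 z)))) = q2 z" "snd (ends (a (n (q2 z)))) = q2 z"
      using cn q by auto
    have inF1: "a x \<in> Fac" if "x \<in> X" for x using that unfolding Fac_def by auto
    have inF2: "r (c y) \<in> Fac" if "y \<in> Y'" for y using that unfolding Fac_def by auto
    have ja: "joins ends (a x) x (snd (ends (a x)))" if "x \<in> X" for x using ends_a[OF that] unfolding joins_def by auto
    have jr: "joins ends (r x) x (snd (ends (r x)))" if "x \<in> X" for x using ends_r[OF that] unfolding joins_def by auto
    have jsym: "joins ends e u w \<longleftrightarrow> joins ends e w u" for e u w unfolding joins_def by auto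
    have XY1: "\<exists>!e. e \<in> Fac \<and> joins ends e x y" if "x \<in> X" "snd (ends (a x)) = y" for x y
    proof (rule ex1I[of _ "a x"])
      show "a x \<in> Fac \<and> joins ends (a x) x y" using inF1 ja that by auto
      show "\<And>e. e \<in> Fac \<and> joins ends e x y \<Longrightarrow> e = a x" using J1 that ya_Y' by blast
    qed
    have XY2: "\<exists>!e. e \<in> Fac \<and> joins ends e y x" if "x \<in> X" "snd (ends (a x)) = y" for x y
      using XY1[OF that] jsym by presburger
    have XZ1: "\<exists>!e. e \<in> Fac \<and> joins ends e (c y) z" if "y \<in> Y'" "snd (ends (r (c y))) = z" for y
    proof -
      have "r (c y) \<in> Fac \<and> joins ends (r (c y)) (c y) z" using inF2 jr cn that by metis
      then show ?thesis using J2[OF _ z(1)] cn that by blast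
    qed
    have XZ2: "\<exists>!e. e \<in> Fac \<and> joins ends e z (c y)" if "y \<in> Y'" "snd (ends (r (c y))) = z" for y
      using XZ1[OF that] by (simp add: jsym[of _ z "c y"])
    have "i = 0 \<or> i = 1 \<or> i = 2 \<or> i = 3 \<or> i = 4 \<or> i = 5" using i by auto
    then show "\<exists>!e. e \<in> Fac \<and> joins ends e (p ! i) (p ! Suc i)"
    proof (elim disjE)
      assume "i = 0" then show ?thesis using z(2) XY1[OF c1(2) c1(4)] unfolding Path_def by simp
    next
      assume "i = 1" then show ?thesis using z(2) XY2[OF c1(1) c1(3)] unfolding Path_def by simp
    next
      assume "i = 2" then show ?thesis using z(2) XZ1[OF q(1) q(3)] unfolding Path_def by simp
    next
      assume "i = 3" then show ?thesis using z(2) XZ2[OF q(2) q(4)] unfolding Path_def by simp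
    next
      assume "i = 4" then show ?thesis using z(2) XY1[OF c2(1) c2(3)] unfolding Path_def by (simp add: numeral_eq_Suc)
    next
      assume "i = 5" then show ?thesis using z(2) XY2[OF c2(2) c2(4)] unfolding Path_def by (simp add: numeral_eq_Suc)
    qed
  qed
  show "\<forall>e\<in>Fac. \<exists>p\<in>Path ` (Y - Y'). \<exists>i<6. joins ends e (p ! i) (p ! Suc i)"
  proof
    fix e assume e: "e \<in> Fac"
    have ja: "joins ends (a x) x (snd (ends (a x)))" if "x \<in> X" for x using ends_a[OF that] unfolding joins_def by auto
    have jr: "joins ends (r x) x (snd (ends (r x)))" if "x \<in> X" for x using ends_r[OF that] unfolding joins_def by auto
    have jsym: "joins ends e u w \<longleftrightarrow> joins ends e w u" for e u w unfolding joins_def by auto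
    show "\<exists>p\<in>Path ` (Y - Y'). \<exists>i<6. joins ends e (p ! i) (p ! Suc i)"
    proof (cases "e \<in> a ` X")
      case True
      then obtain x where x: "x \<in> X" "e = a x" by auto
      define y where "y = snd (ends (a x))"
      have y: "y \<in> Y'" using ya_Y' x y_def by simp
      define z where "z = snd (ends (r (c y)))"
      have zz: "z \<in> Y - Y'" "y = q1 z \<or> y = q2 z" using yq[OF y] z_def by auto
      have xx: "x = c y \<or> x = n y" using xcn x y_def by simp
      have jj: "joins ends e x y" using ja x y_def by simp
      have P: "Path z ! 0 = n (q1 z)" "Path z ! 1 = q1 z" "Path z ! 2 = c (q1 z)"
        "Path z ! 4 = c (q2 z)" "Path z ! 5 = q2 z" "Path z ! 6 = n (q2 z)" unfolding Path_def by (simp_all add: numeral_eq_Suc)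
      have "\<exists>i<6. joins ends e (Path z ! i) (Path z ! Suc i)"
      proof -
        have jj': "joins ends e y x" using jj jsym by blast
        have P': "Path z ! Suc 0 = q1 z" "Path z ! Suc 1 = c (q1 z)" "Path z ! Suc 4 = q2 z" "Path z ! Suc 5 = n (q2 z)"
          unfolding Path_def by (simp_all add: numeral_eq_Suc)
        show ?thesis
        proof (cases "y = q1 z")
          case yq1: True
          show ?thesis
          proof (cases "x = n y")
            case True then show ?thesis using jj P P' yq1 by (intro exI[of _ 0]) simp
          next
            case False then have "x = c y" using xx by simp
            then show ?thesis using jj' P P' yq1 by (intro exI[of _ 1]) simp
          qed
        next
          case False
          then have yq2: "y = q2 z" using zz(2) by simp
          show ?thesis
          proof (cases "x = n y")
            case True then show ?thesis using jj' P P' yq2 by (intro exI[of _ 5]) simp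
          next
            case False then have "x = c y" using xx by simp
            then show ?thesis using jj P P' yq2 by (intro exI[of _ 4]) simp
          qed
        qed
      qed
      then show ?thesis using zz(1) by blast
    next
      case False
      then obtain y where y: "y \<in> Y'" "e = r (c y)" using e unfolding Fac_def by auto
      define z where "z = snd (ends (r (c y)))"
      have zz: "z \<in> Y - Y'" "y = q1 z \<or> y = q2 z" using yq[OF y(1)] z_def by auto
      have jj: "joins ends e (c y) z" using jr cn y z_def by simp
      have P: "Path z ! 2 = c (q1 z)" "Path z ! 3 = z" "Path z ! 4 = c (q2 z)" unfolding Path_def by (simp_all add: numeral_eq_Suc)
      have "\<exists>i<6. joins ends e (Path z ! i) (Path z ! Suc i)"
      proof -
        have jj': "joins ends e z (c y)" using jj jsym by blast
        have P': "Path z ! Suc 2 = z" "Path z ! Suc 3 = c (q2 z)" unfolding Path_def by (simp_all add: numeral_eq_Suc)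
        show ?thesis
        proof (cases "y = q1 z")
          case True then show ?thesis using jj P P' by (intro exI[of _ 2]) simp
        next
          case False then have "y = q2 z" using zz(2) by simp
          then show ?thesis using jj' P P' by (intro exI[of _ 3]) simp
        qed
      qed
      then show ?thesis using zz(1) by blast
    qed
  qed
qed

end



definition "L1f t = (if t then 5 else 2::nat)"
definition "L2f s t = (if s then (if t then 2 else 1) else (if t then 6 else 5::nat))"
definition "L3f s t = (if s then (if t then 1 else 2) else (if t then 5 else 6::nat))"
definition "R4f t = (if t then 2 else 5::nat)"
definition "R5f t = (if t then 1 else 6::nat)"
definition "R6f t = (if t then 2 else 5::nat)"

lemma vert:
  assumes "finite I" "card I = Suc hi - lo" "f ` I = {lo..hi}"
  shows "(\<forall>e\<in>I. \<forall>e'\<in>I. e \<noteq> e' \<longrightarrow> f e \<noteq> f e') \<and> (\<exists>a b. f ` I = {a..b})"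
proof -
  have "card (f ` I) = card I" using assms by simp
  then have "inj_on f I" using eq_card_imp_inj_on assms(1) by blast
  then show ?thesis using assms(3) unfolding inj_on_def by blast
qed

context L2
begin

definition "Rp = E - Fac"

definition colf :: "('e \<Rightarrow> bool) \<Rightarrow> 'e \<Rightarrow> nat" where
  "colf tc e = (if e \<in> Rp then (if tc e then 3 else 4) else
     (let x = fst (ends e); y = snd (ends (a x)); z = snd (ends (r (c y)));
          s = tc (b (c (q1 z))); t = tc (b (c (q2 z))) in
      if y = q1 z then (if x = c y then (if e = r x then L3f s t else L2f s t) else L1f t)
      else (if x = c y then (if e = r x then R4f t else R5f t) else R6f t)))"

lemma incX: "e \<in> E \<Longrightarrow> x \<in> X \<Longrightarrow> incident ends e x \<longleftrightarrow> fst (ends e) = x"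
  using endsE disj unfolding incident_def by auto
lemma incY: "e \<in> E \<Longrightarrow> y \<in> Y \<Longrightarrow> incident ends e y \<longleftrightarrow> snd (ends e) = y"
  using endsE disj unfolding incident_def by auto

lemma a_inj: "x \<in> X \<Longrightarrow> x' \<in> X \<Longrightarrow> a x = a x' \<Longrightarrow> x = x'"
  using A1 by metis
lemma r_inj: "x \<in> X \<Longrightarrow> x' \<in> X \<Longrightarrow> r x = r x' \<Longrightarrow> x = x'"
  using A1 by metis

lemma a_Fac: "x \<in> X \<Longrightarrow> a x \<in> Fac" unfolding Fac_def by auto

lemma b_Rp: "x \<in> X \<Longrightarrow> b x \<in> Rp"
proof -
  assume x: "x \<in> X"
  have "b x \<notin> a ` X"
  proof
    assume "b x \<in> a ` X"
    then obtain x' where "x' \<in> X" "b x = a x'" by auto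
    then show False using A1 x by metis
  qed
  moreover have "b x \<notin> r ` (c ` Y')"
  proof
    assume "b x \<in> r ` (c ` Y')"
    then obtain y where "y \<in> Y'" "b x = r (c y)" by auto
    then show False using A1 x cn by (metis DiffD2)
  qed
  ultimately show ?thesis unfolding Rp_def Fac_def using aE x by auto
qed

lemma r_Rp: "x \<in> X \<Longrightarrow> r x \<in> Rp \<longleftrightarrow> x \<notin> c ` Y'"
proof -
  assume x: "x \<in> X"
  have "r x \<notin> a ` X"
  proof
    assume "r x \<in> a ` X"
    then obtain x' where "x' \<in> X" "r x = a x'" by auto
    then show False using aE x by metis
  qed
  moreover have "r x \<in> r ` (c ` Y') \<longleftrightarrow> x \<in> c ` Y'"
    using r_inj x cn by auto
  ultimately show ?thesis unfolding Rp_def Fac_def using aE x by auto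
qed

lemma n_notc: "y \<in> Y' \<Longrightarrow> n y \<notin> c ` Y'"
proof
  assume y: "y \<in> Y'" and "n y \<in> c ` Y'"
  then obtain y' where y': "y' \<in> Y'" "n y = c y'" by auto
  then have "y' = y" using cn y by metis
  then show False using cn y y' by metis
qed

lemma Rp_y: assumes y: "y \<in> Y'" shows "{e\<in>Rp. snd (ends e) = y} = {e\<in>E. snd (ends e) = y} - {a (c y), a (n y)}"
proof -
  have "e \<in> Fac \<Longrightarrow> snd (ends e) = y \<Longrightarrow> e \<in> {a (c y), a (n y)}" for e
  proof -
    assume e: "e \<in> Fac" "snd (ends e) = y"
    show ?thesis
    proof (cases "e \<in> a ` X")
      case True
      then obtain x where x: "x \<in> X" "e = a x" by auto
      then have "x \<in> {x'\<in>X. snd (ends (a x')) = y}" using e by simp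
      then have "x \<in> {c y, n y}" using A4 y by auto
      then show ?thesis using x by auto
    next
      case False
      then obtain y' where "y' \<in> Y'" "e = r (c y')" using e unfolding Fac_def by auto
      then have "snd (ends e) \<in> Y - Y'" using zr_Z cn by blast
      then show ?thesis using e y by auto
    qed
  qed
  moreover have "a (c y) \<in> Fac" "a (n y) \<in> Fac" using a_Fac cn y by auto
  ultimately show ?thesis unfolding Rp_def using cn y by auto
qed

lemma Rp_z: assumes z: "z \<in> Y - Y'" shows "{e\<in>Rp. snd (ends e) = z} = {e\<in>E. snd (ends e) = z} - {r (c (q1 z)), r (c (q2 z))}"
proof -
  have "e \<in> Fac \<Longrightarrow> snd (ends e) = z \<Longrightarrow> e \<in> {r (c (q1 z)), r (c (q2 z))}" for e
  proof -
    assume e: "e \<in> Fac" "snd (ends e) = z"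
    show ?thesis
    proof (cases "e \<in> a ` X")
      case True
      then obtain x where x: "x \<in> X" "e = a x" by auto
      then have "snd (ends e) \<in> Y'" using ya_Y' by blast
      then show ?thesis using e z by auto
    next
      case False
      then obtain y' where y': "y' \<in> Y'" "e = r (c y')" using e unfolding Fac_def by auto
      then have "y' \<in> {y\<in>Y'. snd (ends (r (c y))) = z}" using e by simp
      then have "y' \<in> {q1 z, q2 z}" using A5 z by auto
      then show ?thesis using y' by auto
    qed
  qed
  moreover have "r (c (q1 z)) \<in> Fac" "r (c (q2 z)) \<in> Fac" using qq z unfolding Fac_def by auto
  ultimately show ?thesis unfolding Rp_def by auto
qed

lemma two_of_four:
  assumes "finite S" "card S = 4" "T \<subseteq> S" "card T = 2"
  shows "\<exists>p q. p \<noteq> q \<and> S - T = {p, q}"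
proof -
  have "card (S - T) = 2" using assms card_Diff_subset[OF finite_subset[OF assms(3,1)] assms(3)] by simp
  then show ?thesis using card_2_iff by metis
qed

lemma Rp_y2: assumes y: "y \<in> Y'" shows "\<exists>p q. p \<noteq> q \<and> {e\<in>Rp. snd (ends e) = y} = {p, q}"
proof -
  have "card {e\<in>E. snd (ends e) = y} = 4" using degY y Y'Y by auto
  moreover have "{a (c y), a (n y)} \<subseteq> {e\<in>E. snd (ends e) = y}" using cn y aE by auto
  moreover have "card {a (c y), a (n y)} = 2" using cn y a_inj by fastforce
  ultimately show ?thesis unfolding Rp_y[OF y] using two_of_four finE by (metis (no_types, lifting) finite_subset mem_Collect_eq subsetI)
qed

lemma Rp_z2: assumes z: "z \<in> Y - Y'" shows "\<exists>p q. p \<noteq> q \<and> {e\<in>Rp. snd (ends e) = z} = {p, q}"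
proof -
  have q: "q1 z \<in> Y'" "q2 z \<in> Y'" "q1 z \<noteq> q2 z" "snd (ends (r (c (q1 z)))) = z" "snd (ends (r (c (q2 z)))) = z" using qq z by auto
  have "card {e\<in>E. snd (ends e) = z} = 4" using degY z by auto
  moreover have "{r (c (q1 z)), r (c (q2 z))} \<subseteq> {e\<in>E. snd (ends e) = z}" using cn q aE by auto
  moreover have "c (q1 z) \<noteq> c (q2 z)" using cn q by metis
  then have "card {r (c (q1 z)), r (c (q2 z))} = 2" using cn q r_inj by fastforce
  ultimately show ?thesis unfolding Rp_z[OF z] using two_of_four finE by (metis (no_types, lifting) finite_subset mem_Collect_eq subsetI)
qed

lemma Rp_E: "Rp \<subseteq> E" unfolding Rp_def by auto

lemma Rp_x: assumes x: "x \<in> X" shows "{e\<in>Rp. fst (ends e) = x} \<subseteq> {b x, r x}"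
proof
  fix e assume "e \<in> {e\<in>Rp. fst (ends e) = x}"
  then have "e \<in> {e\<in>E. fst (ends e) = x}" "e \<notin> Fac" unfolding Rp_def by auto
  then show "e \<in> {b x, r x}" using A2 x a_Fac[OF x] by auto
qed

lemma Rp_deg2b: "deg2b Rp ends"
proof -
  have "\<exists>p q. {e\<in>Rp. incident ends e v} \<subseteq> {p, q}" for v
  proof (cases "v \<in> X")
    case True
    then show ?thesis using Rp_x[OF True] incX Rp_E by blast
  next
    case nX: False
    show ?thesis
    proof (cases "v \<in> Y'")
      case True
      then obtain p q where "{e\<in>Rp. snd (ends e) = v} = {p, q}" using Rp_y2 by blast
      moreover have "{e\<in>Rp. incident ends e v} \<subseteq> {e\<in>Rp. snd (ends e) = v}" using incY Rp_E True Y'Y by blast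
      ultimately show ?thesis by blast
    next
      case nY': False
      show ?thesis
      proof (cases "v \<in> Y")
        case True
        then obtain p q where "{e\<in>Rp. snd (ends e) = v} = {p, q}" using Rp_z2 nY' by blast
        moreover have "{e\<in>Rp. incident ends e v} \<subseteq> {e\<in>Rp. snd (ends e) = v}" using incY Rp_E True by blast
        ultimately show ?thesis by blast
      next
        case False
        have "{e\<in>Rp. incident ends e v} = {}" using Rp_E endsE nX False unfolding incident_def by fastforce
        then show ?thesis by blast
      qed
    qed
  qed
  then show ?thesis unfolding deg2b_def
  proof (intro allI ballI impI)
    fix v e1 e2 e3 assume H: "\<And>v. \<exists>p q. {e\<in>Rp. incident ends e v} \<subseteq> {p, q}"
      and e: "e1 \<in> Rp" "e2 \<in> Rp" "e3 \<in> Rp" "incident ends e1 v \<and> incident ends e2 v \<and> incident ends e3 v"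
    obtain p q where "{e\<in>Rp. incident ends e v} \<subseteq> {p, q}" using H by blast
    then have "e1 \<in> {p, q}" "e2 \<in> {p, q}" "e3 \<in> {p, q}" using e by auto
    then show "e1 = e2 \<or> e1 = e3 \<or> e2 = e3" by auto
  qed
qed

lemma tc_exists: "\<exists>tc. good Rp ends tc"
proof -
  have "finite Rp" using Rp_E finE finite_subset by blast
  moreover have "\<forall>e\<in>Rp. fst (ends e) \<in> X \<and> snd (ends e) \<in> Y" using Rp_E endsE by blast
  ultimately show ?thesis using twocol_aux[OF _ refl disj _ Rp_deg2b] by blast
qed

end



lemma vert3:
  assumes "finite I" "card I = 3" "f ` I = {lo..lo+2::nat}"
  shows "(\<forall>e\<in>I. \<forall>e'\<in>I. e \<noteq> e' \<longrightarrow> f e \<noteq> f e') \<and> (\<exists>a b. f ` I = {a..b})"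
  by (rule vert[OF assms(1) _ assms(3)]) (simp add: assms(2))

lemma vert4:
  assumes "finite I" "card I = 4" "f ` I = {lo..lo+3::nat}"
  shows "(\<forall>e\<in>I. \<forall>e'\<in>I. e \<noteq> e' \<longrightarrow> f e \<noteq> f e') \<and> (\<exists>a b. f ` I = {a..b})"
  by (rule vert[OF assms(1) _ assms(3)]) (simp add: assms(2))

context L2
begin

lemma col_Rp: "e \<in> Rp \<Longrightarrow> colf tc e = (if tc e then 3 else 4)"
  unfolding colf_def by simp

lemma pair34: "p \<in> Rp \<Longrightarrow> q \<in> Rp \<Longrightarrow> tc p \<noteq> tc q \<Longrightarrow> {colf tc p, colf tc q} = {3, 4}"
  using col_Rp[of p tc] col_Rp[of q tc] by (cases "tc p") auto

lemma col_eval: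
  fixes tc :: "'e \<Rightarrow> bool"
  assumes y: "y \<in> Y'"
  defines "z \<equiv> snd (ends (r (c y)))"
  defines "s \<equiv> tc (b (c (q1 z)))" and "t \<equiv> tc (b (c (q2 z)))"
  shows "colf tc (a (c y)) = (if y = q1 z then L2f s t else R5f t)"
    and "colf tc (a (n y)) = (if y = q1 z then L1f t else R6f t)"
    and "colf tc (r (c y)) = (if y = q1 z then L3f s t else R4f t)"
proof -
  have C: "c y \<in> X" "n y \<in> X" "snd (ends (a (c y))) = y" "snd (ends (a (n y))) = y" "c y \<noteq> n y" using cn y by auto
  have F1: "fst (ends (a (c y))) = c y" "fst (ends (a (n y))) = n y" "fst (ends (r (c y))) = c y" using A1 C by auto
  have nR: "a (c y) \<notin> Rp" "a (n y) \<notin> Rp" "r (c y) \<notin> Rp" using a_Fac C r_Rp y unfolding Rp_def by auto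
  have ne: "a (c y) \<noteq> r (c y)" using aE C by metis
  show "colf tc (a (c y)) = (if y = q1 z then L2f s t else R5f t)"
    unfolding colf_def using nR F1 C ne unfolding z_def s_def t_def Let_def by simp
  show "colf tc (a (n y)) = (if y = q1 z then L1f t else R6f t)"
    unfolding colf_def using nR F1 C unfolding z_def s_def t_def Let_def by simp
  show "colf tc (r (c y)) = (if y = q1 z then L3f s t else R4f t)"
    unfolding colf_def using nR F1 C unfolding z_def s_def t_def Let_def by simp
qed

lemma coloring: "\<exists>col. interval_coloring 6 (X \<union> Y) E ends col"
proof -
  obtain tc where tc: "good Rp ends tc" using tc_exists by blast
  have bipR: "\<forall>e\<in>Rp. fst (ends e) \<in> X \<and> snd (ends e) \<in> Y" using Rp_E endsE by blast
  have tcd: "tc e \<noteq> tc f" if "e \<in> Rp" "f \<in> Rp" "e \<noteq> f" "fst (ends e) = fst (ends f) \<or> snd (ends e) = snd (ends f)" for e f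
    using good_iff[OF disj bipR, THEN iffD1, OF tc] that by blast
  define col where "col = colf tc"
  have range: "col e \<in> {1..6}" for e
    unfolding col_def colf_def Let_def L1f_def L2f_def L3f_def R4f_def R5f_def R6f_def by auto
  have V: "(\<forall>e\<in>{e\<in>E. incident ends e v}. \<forall>e'\<in>{e\<in>E. incident ends e v}. e \<noteq> e' \<longrightarrow> col e \<noteq> col e')
      \<and> (\<exists>a b. col ` {e\<in>E. incident ends e v} = {a..b})" if v: "v \<in> X \<union> Y" for v
  proof (cases "v \<in> X")
    case True
    define x where "x = v"
    have x: "x \<in> X" using True x_def by simp
    have I: "{e\<in>E. incident ends e v} = {a x, b x, r x}" using A2 x incX x_def by auto
    have F3: "a x \<in> F" "b x \<in> F" "r x \<notin> F" "a x \<noteq> b x" using aE x A1 by auto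
    have d: "a x \<noteq> b x" "a x \<noteq> r x" "b x \<noteq> r x" using F3 by auto
    have card: "card {a x, b x, r x} = 3" using d by simp
    define y where "y = snd (ends (a x))"
    have y: "y \<in> Y'" using ya_Y' x y_def by simp
    define z where "z = snd (ends (r (c y)))"
    have zz: "z \<in> Y - Y'" "y = q1 z \<or> y = q2 z" using yq[OF y] z_def by auto
    have qz: "q1 z \<noteq> q2 z" using qq zz(1) by blast
    have img: "\<exists>lo. col ` {a x, b x, r x} = {lo..lo+2}"
    proof (cases "x = n y")
      case True
      have bR: "b x \<in> Rp" "r x \<in> Rp" using b_Rp x r_Rp n_notc y True by auto
      have "tc (b x) \<noteq> tc (r x)" using tcd[OF bR d(3)] A1 x by auto
      then have p: "{col (b x), col (r x)} = {3, 4}" using pair34[OF bR] col_def by simp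
      have "col (a x) = (if y = q1 z then L1f (tc (b (c (q2 z)))) else R6f (tc (b (c (q2 z)))))"
        using col_eval(2)[OF y, of tc] True z_def col_def by simp
      then have "col (a x) = 2 \<or> col (a x) = 5" unfolding L1f_def R6f_def by auto
      moreover have "col ` {a x, b x, r x} = insert (col (a x)) {col (b x), col (r x)}" by simp
      ultimately show ?thesis
      proof (elim disjE)
        assume "col (a x) = 2" then have "col ` {a x, b x, r x} = insert 2 {3, 4}" using p by simp
        also have "insert 2 {3, 4} = {2..2+2::nat}" by auto
        finally have "col ` {a x, b x, r x} = {2..2+2}" .
        then show ?thesis by blast
      next
        assume "col (a x) = 5" then have "col ` {a x, b x, r x} = insert 5 {3, 4}" using p by simp
        also have "insert 5 {3, 4} = {3..3+2::nat}" by auto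
        finally have "col ` {a x, b x, r x} = {3..3+2}" .
        then show ?thesis by blast
      qed
    next
      case False
      then have xc: "x = c y" using xcn x y_def by auto
      have bR: "b x \<in> Rp" using b_Rp x by auto
      have cb: "col (b x) = (if tc (b x) then 3 else 4)" using col_Rp[OF bR] col_def by simp
      have ca: "col (a x) = (if y = q1 z then L2f (tc (b (c (q1 z)))) (tc (b (c (q2 z)))) else R5f (tc (b (c (q2 z)))))"
        using col_eval(1)[OF y, of tc] xc z_def col_def by simp
      have cr: "col (r x) = (if y = q1 z then L3f (tc (b (c (q1 z)))) (tc (b (c (q2 z)))) else R4f (tc (b (c (q2 z)))))"
        using col_eval(3)[OF y, of tc] xc z_def col_def by simp
      have "col ` {a x, b x, r x} = {(if tc (b x) then 1 else 4)..(if tc (b x) then 1 else 4) + 2}"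
      proof (cases "y = q1 z")
        case True
        then have "b x = b (c (q1 z))" using xc by simp
        then show ?thesis using ca cb cr True unfolding L2f_def L3f_def
          by (cases "tc (b (c (q1 z)))"; cases "tc (b (c (q2 z)))") auto
      next
        case False
        then have "y = q2 z" using zz(2) by simp
        then have "b x = b (c (q2 z))" using xc by simp
        then show ?thesis using ca cb cr False unfolding R5f_def R4f_def
          by (cases "tc (b (c (q2 z)))") auto
      qed
      then show ?thesis by blast
    qed
    then obtain lo where "col ` {a x, b x, r x} = {lo..lo+2}" by blast
    from vert3[OF _ card this] show ?thesis using I by simp
  next
    case False
    then have vY: "v \<in> Y" using v by auto
    have I0: "{e\<in>E. incident ends e v} = {e\<in>E. snd (ends e) = v}" using incY vY by auto
    have cardv: "card {e\<in>E. snd (ends e) = v} = 4" using degY vY by auto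
    have finv: "finite {e\<in>E. snd (ends e) = v}" using finE by simp
    show ?thesis
    proof (cases "v \<in> Y'")
      case True
      define y where "y = v"
      have y: "y \<in> Y'" using True y_def by simp
      obtain p q where pq: "p \<noteq> q" "{e\<in>Rp. snd (ends e) = y} = {p, q}" using Rp_y2[OF y] by blast
      have pR: "p \<in> Rp" "q \<in> Rp" "snd (ends p) = y" "snd (ends q) = y" using pq(2) by blast+
      have "tc p \<noteq> tc q" using tcd[OF pR(1,2) pq(1)] pR by auto
      then have p34: "{col p, col q} = {3, 4}" using pair34[OF pR(1,2)] col_def by simp
      have sub: "{a (c y), a (n y)} \<subseteq> {e\<in>E. snd (ends e) = y}" using cn y aE by auto
      have I: "{e\<in>E. snd (ends e) = v} = {a (c y), a (n y)} \<union> {p, q}"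
        using Rp_y[OF y] pq(2) sub y_def by auto
      define z where "z = snd (ends (r (c y)))"
      have zz: "z \<in> Y - Y'" "y = q1 z \<or> y = q2 z" using yq[OF y] z_def by auto
      have ca: "col (a (c y)) = (if y = q1 z then L2f (tc (b (c (q1 z)))) (tc (b (c (q2 z)))) else R5f (tc (b (c (q2 z)))))"
        using col_eval(1)[OF y, of tc] z_def col_def by simp
      have cn': "col (a (n y)) = (if y = q1 z then L1f (tc (b (c (q2 z)))) else R6f (tc (b (c (q2 z)))))"
        using col_eval(2)[OF y, of tc] z_def col_def by simp
      define lo4 where "lo4 = (if y = q1 z then (if tc (b (c (q1 z))) then (if tc (b (c (q2 z))) then 2 else 1) else (if tc (b (c (q2 z))) then 3 else 2))
         else (if tc (b (c (q2 z))) then 1 else 3::nat))"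
      have "col ` ({a (c y), a (n y)} \<union> {p, q}) = {col (a (c y)), col (a (n y))} \<union> {col p, col q}" by auto
      also have "\<dots> = {lo4..lo4+3}"
        unfolding p34 ca cn' L2f_def R5f_def L1f_def R6f_def lo4_def
        by (cases "tc (b (c (q1 z)))"; cases "tc (b (c (q2 z)))"; cases "y = q1 z") auto
      finally have img: "col ` {e\<in>E. snd (ends e) = v} = {lo4..lo4+3}" using I by simp
      show ?thesis using vert4[OF finv cardv img] I0 by simp
    next
      case False
      define z where "z = v"
      have z: "z \<in> Y - Y'" using False vY z_def by simp
      obtain p q where pq: "p \<noteq> q" "{e\<in>Rp. snd (ends e) = z} = {p, q}" using Rp_z2[OF z] by blast
      have pR: "p \<in> Rp" "q \<in> Rp" "snd (ends p) = z" "snd (ends q) = z" using pq(2) by blast+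
      have "tc p \<noteq> tc q" using tcd[OF pR(1,2) pq(1)] pR by auto
      then have p34: "{col p, col q} = {3, 4}" using pair34[OF pR(1,2)] col_def by simp
      have q: "q1 z \<in> Y'" "q2 z \<in> Y'" "q1 z \<noteq> q2 z" "snd (ends (r (c (q1 z)))) = z" "snd (ends (r (c (q2 z)))) = z"
        using qq z by auto
      have sub: "{r (c (q1 z)), r (c (q2 z))} \<subseteq> {e\<in>E. snd (ends e) = z}" using cn q aE by auto
      have I: "{e\<in>E. snd (ends e) = v} = {r (c (q1 z)), r (c (q2 z))} \<union> {p, q}"
        using Rp_z[OF z] pq(2) sub z_def by auto
      have c1: "col (r (c (q1 z))) = L3f (tc (b (c (q1 z)))) (tc (b (c (q2 z))))"
        using col_eval(3)[OF q(1), of tc] q(4) col_def by simp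
      have c2: "col (r (c (q2 z))) = R4f (tc (b (c (q2 z))))"
        using col_eval(3)[OF q(2), of tc] q(5) q(3) col_def by simp
      define lo4 where "lo4 = (if tc (b (c (q1 z))) then (if tc (b (c (q2 z))) then 1 else 2) else (if tc (b (c (q2 z))) then 2 else 3::nat))"
      have "col ` ({r (c (q1 z)), r (c (q2 z))} \<union> {p, q}) = {col (r (c (q1 z))), col (r (c (q2 z)))} \<union> {col p, col q}" by auto
      also have "\<dots> = {lo4..lo4+3}"
        unfolding p34 c1 c2 L3f_def R4f_def lo4_def
        by (cases "tc (b (c (q1 z)))"; cases "tc (b (c (q2 z)))") auto
      finally have img: "col ` {e\<in>E. snd (ends e) = v} = {lo4..lo4+3}" using I by simp
      show ?thesis using vert4[OF finv cardv img] I0 by simp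
    qed
  qed
  have "interval_coloring 6 (X \<union> Y) E ends col"
    unfolding interval_coloring_def
  proof (intro conjI)
    show "\<forall>e\<in>E. col e \<in> {1..6}" using range by blast
    show "\<forall>v\<in>X \<union> Y. \<forall>e\<in>E. \<forall>e'\<in>E. e \<noteq> e' \<and> incident ends e v \<and> incident ends e' v \<longrightarrow> col e \<noteq> col e'"
      using V by blast
    show "\<forall>v\<in>X \<union> Y. \<exists>a b. col ` {e \<in> E. incident ends e v} = {a..b}" using V by blast
  qed
  then show ?thesis by blast
qed

end



lemma build:
  fixes X Y :: "'v set" and E :: "'e set" and ends :: "'e \<Rightarrow> 'v \<times> 'v" and Y' :: "'v set" and F :: "'e set"
  assumes bE: "biregular X Y E ends 3 4" and Y'Y: "Y' \<subseteq> Y" and FE: "F \<subseteq> E" and bF: "biregular X Y' F ends 2 4"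
  shows "\<exists>a b r c n q1 q2. L2 X Y E ends Y' F a b r c n q1 q2"
proof -
  have bg: "bigraph X Y E ends" and dX: "\<forall>x\<in>X. deg E ends x = 3" and dY: "\<forall>y\<in>Y. deg E ends y = 4"
    using bE unfolding biregular_def by auto
  have bgF: "bigraph X Y' F ends" and dFX: "\<forall>x\<in>X. deg F ends x = 2" and dFY: "\<forall>y\<in>Y'. deg F ends y = 4"
    using bF unfolding biregular_def by auto
  have finX: "finite X" and finY: "finite Y" and finE: "finite E" and disj: "X \<inter> Y = {}"
    and endsE: "\<forall>e\<in>E. fst (ends e) \<in> X \<and> snd (ends e) \<in> Y" using bg unfolding bigraph_def by auto
  have finF: "finite F" and endsF: "\<forall>e\<in>F. fst (ends e) \<in> X \<and> snd (ends e) \<in> Y'" using bgF unfolding bigraph_def by auto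
  have incX: "incident ends e x \<longleftrightarrow> fst (ends e) = x" if "e \<in> E" "x \<in> X" for e x
    using that endsE disj unfolding incident_def by auto
  have incY: "incident ends e y \<longleftrightarrow> snd (ends e) = y" if "e \<in> E" "y \<in> Y" for e y
    using that endsE disj unfolding incident_def by auto
  have cX: "card {e\<in>E. fst (ends e) = x} = 3" if x: "x \<in> X" for x
  proof -
    have "{e\<in>E. fst (ends e) = x} = {e\<in>E. incident ends e x}" using incX x by auto
    then show ?thesis using dX x unfolding deg_def by simp
  qed
  have cFX: "card {e\<in>F. fst (ends e) = x} = 2" if x: "x \<in> X" for x
  proof -
    have "{e\<in>F. fst (ends e) = x} = {e\<in>F. incident ends e x}" using incX x FE by auto
    then show ?thesis using dFX x unfolding deg_def by simp
  qed
  have cY: "card {e\<in>E. snd (ends e) = y} = 4" if y: "y \<in> Y" for y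
  proof -
    have "{e\<in>E. snd (ends e) = y} = {e\<in>E. incident ends e y}" using incY y by auto
    then show ?thesis using dY y unfolding deg_def by simp
  qed
  have cFY: "card {e\<in>F. snd (ends e) = y} = 4" if y: "y \<in> Y'" for y
  proof -
    have "{e\<in>F. snd (ends e) = y} = {e\<in>F. incident ends e y}" using incY y FE Y'Y by auto
    then show ?thesis using dFY y unfolding deg_def by simp
  qed
  have evF: "even (card {e\<in>F. snd (ends e) = v})" for v
  proof (cases "v \<in> Y'")
    case True then show ?thesis using cFY by simp
  next
    case False
    then have "{e\<in>F. snd (ends e) = v} = {}" using endsF by auto
    then show ?thesis by (metis card.empty even_zero)
  qed
  have g1: "\<forall>s\<in>F. fst (ends s) \<in> X" using endsF by blast
  have f1: "\<forall>t\<in>X. card {s\<in>F. fst (ends s) = t} = 2" using cFX by blast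
  have e1: "\<forall>v. even (card {s\<in>F. snd (ends s) = v})" using evF by blast
  note PO1 = pair_orient[OF finF finX g1 f1 e1]
  from PO1 obtain a b where ab: "\<forall>x\<in>X. a x \<in> F \<and> b x \<in> F \<and> fst (ends (a x)) = x \<and> fst (ends (b x)) = x \<and> a x \<noteq> b x \<and> {s\<in>F. fst (ends s) = x} = {a x, b x}"
    and ab2: "\<forall>v. 2 * card {x\<in>X. snd (ends (a x)) = v} = card {s\<in>F. snd (ends s) = v}" by blast
  have "\<forall>x\<in>X. \<exists>e. {e'\<in>E - F. fst (ends e') = x} = {e}"
  proof
    fix x assume x: "x \<in> X"
    have un: "{e\<in>E. fst (ends e) = x} = {e\<in>F. fst (ends e) = x} \<union> {e\<in>E - F. fst (ends e) = x}" using FE by auto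
    have "card {e\<in>E. fst (ends e) = x} = card {e\<in>F. fst (ends e) = x} + card {e\<in>E - F. fst (ends e) = x}"
      unfolding un by (rule card_Un_disjoint) (use finE finF in auto)
    then have "card {e\<in>E - F. fst (ends e) = x} = Suc 0" using cX[OF x] cFX[OF x] by simp
    from this[unfolded card_1_singleton_iff] show "\<exists>e. {e'\<in>E - F. fst (ends e') = x} = {e}" .
  qed
  from bchoice[OF this] obtain r where r: "\<forall>x\<in>X. {e'\<in>E - F. fst (ends e') = x} = {r x}" by blast
  have rE: "r x \<in> E - F" "fst (ends (r x)) = x" if "x \<in> X" for x
  proof -
    have "r x \<in> {e'\<in>E - F. fst (ends e') = x}" using r that by blast
    then show "r x \<in> E - F" "fst (ends (r x)) = x" by auto
  qed
  have A1: "\<forall>x\<in>X. a x \<in> F \<and> b x \<in> F \<and> r x \<in> E - F \<and> a x \<noteq> b x \<and> fst (ends (a x)) = x \<and> fst (ends (b x)) = x \<and> fst (ends (r x)) = x"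
  proof
    fix x assume x: "x \<in> X"
    show "a x \<in> F \<and> b x \<in> F \<and> r x \<in> E - F \<and> a x \<noteq> b x \<and> fst (ends (a x)) = x \<and> fst (ends (b x)) = x \<and> fst (ends (r x)) = x"
      using ab[rule_format, OF x] rE[OF x] by simp
  qed
  have A2: "\<forall>x\<in>X. {e\<in>E. fst (ends e) = x} = {a x, b x, r x}"
  proof
    fix x assume x: "x \<in> X"
    have "{e\<in>E. fst (ends e) = x} = {e\<in>F. fst (ends e) = x} \<union> {e\<in>E - F. fst (ends e) = x}" using FE by auto
    also have "\<dots> = {a x, b x} \<union> {r x}" using ab[rule_format, OF x] r[rule_format, OF x] by simp
    finally show "{e\<in>E. fst (ends e) = x} = {a x, b x, r x}" by (simp add: insert_commute)
  qed
  have A3: "\<forall>x\<in>X. snd (ends (r x)) \<in> Y - Y'"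
  proof
    fix x assume x: "x \<in> X"
    have rY: "snd (ends (r x)) \<in> Y" using rE[OF x] endsE by blast
    show "snd (ends (r x)) \<in> Y - Y'"
    proof (rule ccontr)
      assume "snd (ends (r x)) \<notin> Y - Y'"
      then have y: "snd (ends (r x)) \<in> Y'" using rY by blast
      define y0 where "y0 = snd (ends (r x))"
      have sub: "{e\<in>F. snd (ends e) = y0} \<subseteq> {e\<in>E. snd (ends e) = y0}" using FE by auto
      have "card {e\<in>F. snd (ends e) = y0} = card {e\<in>E. snd (ends e) = y0}"
        using cFY[of y0] cY[of y0] y Y'Y unfolding y0_def by auto
      then have "{e\<in>F. snd (ends e) = y0} = {e\<in>E. snd (ends e) = y0}"
        using card_subset_eq[OF _ sub] finE by auto
      moreover have "r x \<in> {e\<in>E. snd (ends e) = y0}" using rE[OF x] y0_def by simp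
      ultimately show False using rE[OF x] by blast
    qed
  qed
  have gS: "\<forall>x\<in>X. snd (ends (a x)) \<in> Y'" using ab endsF by blast
  have fib2: "\<forall>y\<in>Y'. card {x\<in>X. snd (ends (a x)) = y} = 2"
  proof
    fix y assume y: "y \<in> Y'"
    have "2 * card {x\<in>X. snd (ends (a x)) = y} = 4" using ab2 cFY[OF y] by simp
    then show "card {x\<in>X. snd (ends (a x)) = y} = 2" by simp
  qed
  have cZ: "card {x\<in>X. snd (ends (r x)) = z} = 4" if z: "z \<in> Y - Y'" for z
  proof -
    have "{e\<in>E. snd (ends e) = z} = r ` {x\<in>X. snd (ends (r x)) = z}"
    proof
      show "r ` {x\<in>X. snd (ends (r x)) = z} \<subseteq> {e\<in>E. snd (ends e) = z}" using rE by auto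
      show "{e\<in>E. snd (ends e) = z} \<subseteq> r ` {x\<in>X. snd (ends (r x)) = z}"
      proof
        fix e assume e: "e \<in> {e\<in>E. snd (ends e) = z}"
        define x where "x = fst (ends e)"
        have x: "x \<in> X" using e endsE x_def by auto
        have "e \<in> {a x, b x, r x}" using A2 x e x_def by auto
        moreover have "snd (ends (a x)) \<in> Y'" "snd (ends (b x)) \<in> Y'" using ab x endsF by auto
        ultimately have "e = r x" using e z by auto
        then show "e \<in> r ` {x\<in>X. snd (ends (r x)) = z}" using x e by auto
      qed
    qed
    moreover have "inj_on r {x\<in>X. snd (ends (r x)) = z}"
      using rE unfolding inj_on_def by (metis (no_types, lifting) mem_Collect_eq)
    ultimately show ?thesis using cY[of z] z card_image by fastforce
  qed
  have ev2: "even (card {x\<in>X. snd (ends (r x)) = v})" for v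
  proof (cases "v \<in> Y - Y'")
    case True then show ?thesis using cZ by simp
  next
    case False
    then have "{x\<in>X. snd (ends (r x)) = v} = {}" using A3 by auto
    then show ?thesis by (metis card.empty even_zero)
  qed
  have "finite Y'" using finY Y'Y finite_subset by blast
  have finX': "finite X" by (rule finX)
  note PO2 = pair_orient[OF finX \<open>finite Y'\<close> gS fib2 allI[OF ev2]]
  from PO2 obtain c n where A4: "\<forall>y\<in>Y'. c y \<in> X \<and> n y \<in> X \<and> snd (ends (a (c y))) = y \<and> snd (ends (a (n y))) = y \<and> c y \<noteq> n y \<and> {x\<in>X. snd (ends (a x)) = y} = {c y, n y}"
    and cn2: "\<forall>v. 2 * card {y\<in>Y'. snd (ends (r (c y))) = v} = card {x\<in>X. snd (ends (r x)) = v}" by blast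
  have "\<forall>z\<in>Y - Y'. \<exists>p. fst p \<noteq> snd p \<and> {y\<in>Y'. snd (ends (r (c y))) = z} = {fst p, snd p}"
  proof
    fix z assume z: "z \<in> Y - Y'"
    have "2 * card {y\<in>Y'. snd (ends (r (c y))) = z} = 4" using cn2 cZ[OF z] by simp
    then have "card {y\<in>Y'. snd (ends (r (c y))) = z} = 2" by simp
    then obtain u w where "{y\<in>Y'. snd (ends (r (c y))) = z} = {u, w}" "u \<noteq> w" unfolding card_2_iff by blast
    then show "\<exists>p. fst p \<noteq> snd p \<and> {y\<in>Y'. snd (ends (r (c y))) = z} = {fst p, snd p}"
      by (intro exI[of _ "(u, w)"]) simp
  qed
  from bchoice[OF this] obtain Q where Q: "\<forall>z\<in>Y - Y'. fst (Q z) \<noteq> snd (Q z) \<and> {y\<in>Y'. snd (ends (r (c y))) = z} = {fst (Q z), snd (Q z)}"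
    by blast
  define q1 where "q1 z = fst (Q z)" for z
  define q2 where "q2 z = snd (Q z)" for z
  have A5: "\<forall>z\<in>Y - Y'. q1 z \<in> Y' \<and> q2 z \<in> Y' \<and> q1 z \<noteq> q2 z \<and> {y\<in>Y'. snd (ends (r (c y))) = z} = {q1 z, q2 z}"
  proof
    fix z assume z: "z \<in> Y - Y'"
    have h: "{y\<in>Y'. snd (ends (r (c y))) = z} = {q1 z, q2 z}" "q1 z \<noteq> q2 z" using Q z unfolding q1_def q2_def by auto
    have "q1 z \<in> {y\<in>Y'. snd (ends (r (c y))) = z}" "q2 z \<in> {y\<in>Y'. snd (ends (r (c y))) = z}" unfolding h by auto
    then show "q1 z \<in> Y' \<and> q2 z \<in> Y' \<and> q1 z \<noteq> q2 z \<and> {y\<in>Y'. snd (ends (r (c y))) = z} = {q1 z, q2 z}" using h by auto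
  qed
  have "L2 X Y E ends Y' F a b r c n q1 q2"
  proof (unfold_locales)
    show "finite X" "finite Y" "finite E" "X \<inter> Y = {}" by (fact finX finY finE disj)+
    show "\<forall>e\<in>E. fst (ends e) \<in> X \<and> snd (ends e) \<in> Y" by (fact endsE)
    show "Y' \<subseteq> Y" "F \<subseteq> E" by (fact Y'Y FE)+
    show "\<forall>e\<in>F. snd (ends e) \<in> Y'" using endsF by blast
    show "\<forall>y\<in>Y. card {e\<in>E. snd (ends e) = y} = 4" using cY by blast
  qed (fact A1 A2 A3 A4 A5)+
  then show ?thesis by blast
qed

theorem mainTheorem5:
  fixes X Y :: "'v set" and E :: "'e set" and ends :: "'e \<Rightarrow> 'v \<times> 'v"
  assumes "biregular X Y E ends 3 4"
    and "\<exists>Y' F. Y' \<subseteq> Y \<and> F \<subseteq> E \<and> biregular X Y' F ends 2 4"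
  shows "P7_factor (X \<union> Y) E ends \<and> (\<exists>c. interval_coloring 6 (X \<union> Y) E ends c)"
proof -
  obtain Y' F where h: "Y' \<subseteq> Y" "F \<subseteq> E" "biregular X Y' F ends 2 4" using assms(2) by blast
  obtain a b r c n q1 q2 where L: "L2 X Y E ends Y' F a b r c n q1 q2" using build[OF assms(1) h] by blast
  show ?thesis using L2.P7[OF L] L2.coloring[OF L] by blast
qed


end
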